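(* Let $\Sigma$ be a finite alphabet with $|\Sigma|=q$, and let $X,Y\subseteq\Sigma^{\mathbb{Z}}$ be constrained systems with capacities satisfying $h(X)\le h(Y)$. Then \[R(X,Y)\ge H_q^{-1}\big(h(Y)-h(X)\big).\]
   Context: A constrained system is a set $X\subseteq\Sigma^{\mathbb{Z}}$ for which there is a finite directed graph with edges labeled by $\Sigma$ such that $X$ is the set of label sequences of bi-infinite directed paths in the graph. $\mathscr{B}_n(X)\subseteq\Sigma^n$ is the set of length-$n$ words appearing as consecutive subwords of elements of $X$. The capacity is $h(X)=\lim_{n\to\infty}\frac{1}{n}\log_q|\mathscr{B}_n(X)|$. With $d$ the Hamming distance, for $A,C\subseteq\Sigma^n$ let $R(C,A)=\max_{\overline{y}\in A}\min_{\overline{x}\in C}d(\overline{x},\overline{y})$, and $R(X,Y)=\liminf_{n\to\infty}\frac{1}{n}R(\mathscr{B}_n(X),\mathscr{B}_n(Y))$. $H_q(x)=x\log_q(q-1)-x\log_q x-(1-x)\log_q(1-x)$ (with $H_q(0)=0$), and $H_q^{-1}:[0,1]\to[0,1-\frac1q]$ is the inverse of the restriction of $H_q$ to $[0,1-\frac1q]$. *)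

theory Defs
  imports "HOL-Analysis.Analysis"
begin

text \<open>A finite directed graph with edges labelled by the alphabet 'a: a finite set of
  edges (source, label, target); vertices are natural numbers (any finite graph can be
  relabelled this way).\<close>

definition path_labels :: "(nat \<times> 'a \<times> nat) set \<Rightarrow> (int \<Rightarrow> 'a) set" where
  "path_labels E = {x. \<exists>p :: int \<Rightarrow> nat \<times> 'a \<times> nat.
      (\<forall>i. p i \<in> E) \<and>
      (\<forall>i. snd (snd (p i)) = fst (p (i + 1))) \<and>
      (\<forall>i. x i = fst (snd (p i)))}"

definition constrained_system :: "(int \<Rightarrow> 'a) set \<Rightarrow> bool" where
  "constrained_system X \<longleftrightarrow> (\<exists>E :: (nat \<times> 'a \<times> nat) set. finite E \<and> X = path_labels E)"

definition blocks :: "nat \<Rightarrow> (int \<Rightarrow> 'a) set \<Rightarrow> 'a list set" where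
  "blocks n X = {w. length w = n \<and> (\<exists>x\<in>X. \<exists>i::int. \<forall>j<n. w ! j = x (i + int j))}"

definition capacity :: "(int \<Rightarrow> 'a::finite) set \<Rightarrow> real" where
  "capacity X = lim (\<lambda>n. log (real CARD('a)) (real (card (blocks n X))) / real n)"

definition hamming :: "'a list \<Rightarrow> 'a list \<Rightarrow> nat" where
  "hamming u v = card {i. i < length u \<and> u ! i \<noteq> v ! i}"

definition cov_radius :: "'a list set \<Rightarrow> 'a list set \<Rightarrow> nat" where
  "cov_radius C A = Max ((\<lambda>y. Min ((\<lambda>x. hamming x y) ` C)) ` A)"

definition system_cov_radius :: "(int \<Rightarrow> 'a) set \<Rightarrow> (int \<Rightarrow> 'a) set \<Rightarrow> ereal" where
  "system_cov_radius X Y =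
     liminf (\<lambda>n. ereal (real (cov_radius (blocks n X) (blocks n Y)) / real n))"

definition Hq :: "real \<Rightarrow> real \<Rightarrow> real" where
  "Hq q x = (if x = 0 then 0 else
     x * log q (q - 1) - x * log q x - (1 - x) * log q (1 - x))"

definition Hq_inv :: "real \<Rightarrow> real \<Rightarrow> real" where
  "Hq_inv q y = (THE x. 0 \<le> x \<and> x \<le> 1 - 1 / q \<and> Hq q x = y)"

end

theory Submission imports Defs "HOL-Real_Asymp.Real_Asymp" begin

lemma Hq_alt: "Hq q x = x * log q (q - 1) - x * log q x - (1 - x) * log q (1 - x)"
  by (simp add: Hq_def)

lemma xlnx_cont: "continuous_on {0..b} (\<lambda>x::real. x * ln x)"
proof -
  have "continuous (at x within {0..b}) (\<lambda>x::real. x * ln x)" if "x \<in> {0..b}" for x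
  proof (cases "x = 0")
    case True
    show ?thesis
    proof (cases "b > 0")
      case True
      have "((\<lambda>x::real. x * ln x) \<longlongrightarrow> 0) (at_right 0)" by real_asymp
      then show ?thesis using True \<open>x = 0\<close>
        by (simp add: continuous_within at_within_Icc_at_right)
    next
      case False
      then have "{0..b} = {0::real}" using that \<open>x = 0\<close> by auto
      then show ?thesis using continuous_on_sing[of "0::real" "\<lambda>x. x * ln x"] \<open>x = 0\<close>
        by (simp add: continuous_on_eq_continuous_within)
    qed
  next
    case False
    then have "x > 0" using that by auto
    then have "isCont (\<lambda>x::real. x * ln x) x" by (auto intro!: continuous_intros)
    then show ?thesis using continuous_at_imp_continuous_within by blast
  qed
  then show ?thesis using continuous_on_eq_continuous_within by blast
qed

lemma Hq_cont:
  assumes "b < 1" "q > 1"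
  shows "continuous_on {0..b} (Hq q)"
proof -
  have e: "Hq q = (\<lambda>x. x * log q (q - 1) - (x * ln x) / ln q - (1 - x) * log q (1 - x))"
    by (rule ext) (simp add: Hq_alt log_def)
  have "continuous_on {0..b} (\<lambda>x. (1 - x) * log q (1 - x))"
    unfolding log_def using assms by (intro continuous_intros) auto
  then show ?thesis unfolding e using assms
    by (intro continuous_intros xlnx_cont) auto
qed

lemma Hq_deriv:
  assumes "0 < x" "x < 1" "q > 1"
  shows "(Hq q has_real_derivative (ln ((q - 1) * (1 - x) / x) / ln q)) (at x)"
proof -
  have e: "Hq q = (\<lambda>x. x * log q (q - 1) - (x * ln x) / ln q - ((1 - x) * ln (1 - x)) / ln q)"
    by (rule ext) (simp add: Hq_alt log_def)
  have "((\<lambda>x. x * log q (q - 1) - (x * ln x) / ln q - ((1 - x) * ln (1 - x)) / ln q) has_real_derivative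
     (log q (q - 1) - (ln x + 1) / ln q - (- ln (1-x) - 1) / ln q)) (at x)"
    using assms by (auto intro!: derivative_eq_intros)
  moreover have "log q (q - 1) - (ln x + 1) / ln q - (- ln (1-x) - 1) / ln q
     = ln ((q - 1) * (1 - x) / x) / ln q"
    using assms by (simp add: log_def ln_mult ln_div diff_divide_distrib add_divide_distrib)
  ultimately show ?thesis unfolding e by simp
qed


lemma Hq_strict_mono:
  assumes "q > 1" "0 \<le> x" "x < y" "y \<le> 1 - 1 / q"
  shows "Hq q x < Hq q y"
proof (rule DERIV_pos_imp_increasing_open[OF assms(3)])
  fix z assume z: "x < z" "z < y"
  have "1 / q > 0" using assms by simp
  then have z1: "0 < z" "z < 1" using z assms by linarith+
  have "q * z < q * y" using z assms by simp
  moreover have "q * y \<le> q - 1" using assms by (simp add: field_simps)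
  ultimately have "z * q < q - 1" by (simp add: algebra_simps)
  then have "(q - 1) * (1 - z) / z > 1" using z1 assms by (simp add: field_simps)
  then have "ln ((q - 1) * (1 - z) / z) / ln q > 0" using assms by simp
  then show "\<exists>d. (Hq q has_real_derivative d) (at z) \<and> d > 0"
    using Hq_deriv[OF z1 assms(1)] by blast
next
  have "1 / q > 0" using assms by simp
  then have "y < 1" using assms by linarith
  then show "continuous_on {x..y} (Hq q)"
    using Hq_cont[of y q] assms by (auto intro: continuous_on_subset)
qed

lemma Hq_zero: "Hq q 0 = 0" by (simp add: Hq_def)

lemma Hq_top:
  assumes "q > 1"
  shows "Hq q (1 - 1 / q) = 1"
proof -
  have a: "log q ((q - 1) / q) = log q (q - 1) - 1" using assms by (simp add: log_divide)
  have b: "log q (1 / q) = - 1" using assms by (simp add: log_divide)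
  have c: "1 - 1 / q = (q - 1) / q" using assms by (simp add: field_simps)
  have d: "1 - (q - 1) / q = 1 / q" using assms by (simp add: field_simps)
  have "Hq q (1 - 1 / q) = (1 - 1/q) * log q (q - 1) - (1 - 1/q) * log q ((q - 1) / q) - (1 / q) * log q (1 / q)"
    unfolding Hq_alt c d by simp
  also have "\<dots> = 1" unfolding a b by (simp add: algebra_simps)
  finally show ?thesis .
qed

lemma Hq_inv_prop:
  assumes "q > 1" "0 \<le> v" "v \<le> 1"
  shows "0 \<le> Hq_inv q v \<and> Hq_inv q v \<le> 1 - 1 / q \<and> Hq q (Hq_inv q v) = v"
proof -
  have "1 / q < 1" "1 / q > 0" using assms by simp_all
  then have b: "1 - 1 / q < 1" "0 \<le> 1 - 1 / q" by linarith+
  have "\<exists>x. 0 \<le> x \<and> x \<le> 1 - 1/q \<and> Hq q x = v"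
    by (rule IVT') (use assms b Hq_zero Hq_top Hq_cont[OF b(1) assms(1)] in auto)
  moreover have "x = y" if "0 \<le> x \<and> x \<le> 1 - 1/q \<and> Hq q x = v" "0 \<le> y \<and> y \<le> 1 - 1/q \<and> Hq q y = v" for x y
    using that Hq_strict_mono[OF assms(1), of x y] Hq_strict_mono[OF assms(1), of y x]
    by (cases x y rule: linorder_cases) auto
  ultimately have "\<exists>!x. 0 \<le> x \<and> x \<le> 1 - 1/q \<and> Hq q x = v" by blast
  from theI'[OF this] show ?thesis unfolding Hq_inv_def .
qed


lemma blocks_subset: "blocks n X \<subseteq> {w. set w \<subseteq> UNIV \<and> length w = n}"
  by (auto simp: blocks_def)

lemma blocks_finite: "finite (blocks n (X :: (int \<Rightarrow> 'a::finite) set))"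
  by (rule finite_subset[OF blocks_subset finite_lists_length_eq[OF finite_class.finite_UNIV]])

lemma card_blocks_le: "card (blocks n (X :: (int \<Rightarrow> 'a::finite) set)) \<le> CARD('a) ^ n"
proof -
  have "card (blocks n X) \<le> card {w. set w \<subseteq> (UNIV::'a set) \<and> length w = n}"
    by (rule card_mono[OF finite_lists_length_eq[OF finite_class.finite_UNIV] blocks_subset])
  also have "\<dots> = CARD('a) ^ n" by (rule card_lists_length_eq[OF finite_class.finite_UNIV])
  finally show ?thesis .
qed

lemma blocks_nonempty:
  assumes "X \<noteq> {}" shows "blocks n X \<noteq> {}"
proof -
  obtain x where "x \<in> X" using assms by blast
  then have "map (\<lambda>j. x (int j)) [0..<n] \<in> blocks n X"
    unfolding blocks_def by (auto intro!: exI[of _ 0])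
  then show ?thesis by blast
qed

lemma card_blocks_pos:
  assumes "X \<noteq> {}" shows "card (blocks n (X :: (int \<Rightarrow> 'a::finite) set)) > 0"
  using blocks_nonempty[OF assms] blocks_finite by (simp add: card_gt_0_iff)

lemma card_blocks_sub:
  "card (blocks (m + n) (X :: (int \<Rightarrow> 'a::finite) set)) \<le> card (blocks m X) * card (blocks n X)"
proof -
  have inj: "inj_on (\<lambda>w. (take m w, drop m w)) (blocks (m + n) X)"
    by (rule inj_onI) (metis append_take_drop_id prod.inject)
  have sub: "(\<lambda>w. (take m w, drop m w)) ` blocks (m + n) X \<subseteq> blocks m X \<times> blocks n X"
  proof
    fix p assume "p \<in> (\<lambda>w. (take m w, drop m w)) ` blocks (m + n) X"
    then obtain w x i where w: "p = (take m w, drop m w)" "length w = m + n" "x \<in> X"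
      "\<forall>j<m+n. w ! j = x (i + int j)"
      unfolding blocks_def by blast
    have "take m w \<in> blocks m X" unfolding blocks_def using w by (auto intro!: bexI[of _ x] exI[of _ i])
    moreover have "drop m w \<in> blocks n X" unfolding blocks_def using w
      by (auto intro!: bexI[of _ x] exI[of _ "i + int m"] simp: algebra_simps)
    ultimately show "p \<in> blocks m X \<times> blocks n X" using w by simp
  qed
  have "card (blocks (m + n) X) = card ((\<lambda>w. (take m w, drop m w)) ` blocks (m + n) X)"
    using card_image[OF inj] by simp
  also have "\<dots> \<le> card (blocks m X \<times> blocks n X)"
    by (rule card_mono[OF _ sub]) (simp add: blocks_finite)
  also have "\<dots> = card (blocks m X) * card (blocks n X)" by (simp add: card_cartesian_product)
  finally show ?thesis .
qed

lemma fekete: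
  fixes f :: "nat \<Rightarrow> real"
  assumes sub: "\<And>m n. f (m + n) \<le> f m + f n" and nn: "\<And>n. f n \<ge> 0"
  shows "convergent (\<lambda>n. f n / real n)"
proof -
  define S where "S = (\<lambda>n. f n / real n) ` {1..}"
  define l where "l = Inf S"
  have bdd: "bdd_below S" unfolding S_def using nn by (auto intro!: bdd_belowI[of _ 0])
  have ne: "S \<noteq> {}" unfolding S_def by auto
  have low: "l \<le> f n / real n" if "n \<ge> 1" for n
    unfolding l_def S_def using that bdd unfolding S_def by (auto intro!: cInf_lower)
  have rep: "f (k * m + s) \<le> real k * f m + f s" for k m s
  proof (induction k)
    case 0 then show ?case by simp
  next
    case (Suc k)
    have "f (Suc k * m + s) = f (m + (k * m + s))" by (simp add: algebra_simps)
    also have "\<dots> \<le> f m + f (k * m + s)" by (rule sub)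
    also have "\<dots> \<le> f m + (real k * f m + f s)" using Suc by simp
    finally show ?case by (simp add: algebra_simps)
  qed
  have "(\<lambda>n. f n / real n) \<longlonglongrightarrow> l"
  proof (rule LIMSEQ_I)
    fix r :: real assume r: "r > 0"
    have "l < l + r / 2" using r by simp
    then obtain s where "s \<in> S" "s < l + r / 2" using cInf_lessD[OF ne] unfolding l_def by blast
    then obtain m where m: "m \<ge> 1" "f m / real m < l + r / 2" unfolding S_def by auto
    define C where "C = Max (f ` {..<m})"
    have C: "f s \<le> C" if "s < m" for s unfolding C_def using that by (intro Max_ge) auto
    have C0: "C \<ge> 0" using C[of 0] nn[of 0] m by simp
    obtain N :: nat where N: "N > 2 * C / r" using reals_Archimedean2 by blast
    show "\<exists>no. \<forall>n\<ge>no. norm (f n / real n - l) < r"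
    proof (intro exI allI impI)
      fix n assume n: "n \<ge> max 1 N"
      then have n1: "n \<ge> 1" and nN: "real n > 2 * C / r" using N by auto
      have "f n = f ((n div m) * m + n mod m)" by simp
      also have "\<dots> \<le> real (n div m) * f m + f (n mod m)" by (rule rep)
      also have "\<dots> \<le> real (n div m) * f m + C" using C[of "n mod m"] m by simp
      finally have fn: "f n \<le> real (n div m) * f m + C" .
      have "real (n div m) * real m \<le> real n"
        by (metis div_times_less_eq_dividend of_nat_le_iff of_nat_mult)
      then have "real (n div m) \<le> real n / real m" using m by (simp add: field_simps)
      then have "real (n div m) * f m \<le> (real n / real m) * f m" by (rule mult_right_mono[OF _ nn])
      then have "f n \<le> real n * (f m / real m) + C" using fn by simp
      then have "f n / real n \<le> f m / real m + C / real n" using n1 by (simp add: field_simps)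
      moreover have "C / real n < r / 2" using nN r n1 C0 by (simp add: field_simps)
      ultimately have "f n / real n < l + r" using m(2) by linarith
      moreover have "l \<le> f n / real n" using low n1 by simp
      ultimately show "norm (f n / real n - l) < r" by simp
    qed
  qed
  then show ?thesis by (rule convergentI)
qed


lemma hamming_le: "hamming u v \<le> length u"
proof -
  have "hamming u v \<le> card {..<length u}" unfolding hamming_def by (rule card_mono) auto
  then show ?thesis by simp
qed

lemma hamming_Cons: "hamming (a # u) (b # v) = (if a = b then 0 else 1) + hamming u v"
proof -
  have e: "{i. i < length (a # u) \<and> (a # u) ! i \<noteq> (b # v) ! i}
      = (if a = b then {} else {0}) \<union> Suc ` {i. i < length u \<and> u ! i \<noteq> v ! i}"
  proof (rule set_eqI)
    fix i show "i \<in> {i. i < length (a # u) \<and> (a # u) ! i \<noteq> (b # v) ! i} \<longleftrightarrow>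
      i \<in> (if a = b then {} else {0}) \<union> Suc ` {i. i < length u \<and> u ! i \<noteq> v ! i}"
      by (cases i) auto
  qed
  have "card ((if a = b then {} else {0}) \<union> Suc ` {i. i < length u \<and> u ! i \<noteq> v ! i})
      = card (if a = b then {} else {0::nat}) + card (Suc ` {i. i < length u \<and> u ! i \<noteq> v ! i})"
    by (rule card_Un_disjoint) auto
  also have "card (Suc ` {i. i < length u \<and> u ! i \<noteq> v ! i}) = hamming u v"
    unfolding hamming_def by (simp add: card_image)
  finally show ?thesis unfolding hamming_def e by simp
qed

fun wt :: "real \<Rightarrow> real \<Rightarrow> 'a list \<Rightarrow> 'a list \<Rightarrow> real" where
  "wt a b (x # xs) (y # ys) = (if x = y then b else a) * wt a b xs ys"
| "wt a b _ _ = 1"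

lemma wt_eq: "length y = length x \<Longrightarrow> wt a b x y = a ^ hamming x y * b ^ (length x - hamming x y)"
proof (induction x arbitrary: y)
  case Nil then show ?case by (simp add: hamming_def)
next
  case (Cons c x)
  then obtain d y' where y: "y = d # y'" "length y' = length x" by (cases y) auto
  have h: "hamming x y' \<le> length x" by (rule hamming_le)
  show ?case
  proof (cases "c = d")
    case True
    then show ?thesis using Cons.IH[OF y(2)] h y
      by (simp add: hamming_Cons Suc_diff_le)
  next
    case False
    then show ?thesis using Cons.IH[OF y(2)] h y
      by (simp add: hamming_Cons)
  qed
qed

lemma wt_nonneg: "0 \<le> a \<Longrightarrow> 0 \<le> b \<Longrightarrow> 0 \<le> wt a b x y"
proof (induction x arbitrary: y)
  case Nil then show ?case by simp
next
  case (Cons c x) then show ?case by (cases y) auto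
qed

lemma sum_if_UNIV:
  "(\<Sum>c\<in>(UNIV :: 'a::finite set). if x = c then b else a) = b + (real CARD('a) - 1) * a"
proof -
  have "(\<Sum>c\<in>(UNIV :: 'a set). if x = c then b else a)
      = (if x = x then b else a) + (\<Sum>c\<in>UNIV - {x}. if x = c then b else a)"
    by (rule sum.remove) auto
  also have "(\<Sum>c\<in>UNIV - {x}. if x = c then b else a) = (\<Sum>c\<in>UNIV - {x}. a)"
    by (rule sum.cong) auto
  also have "\<dots> = real (card (UNIV - {x})) * a" by simp
  also have "card (UNIV - {x}) = CARD('a) - 1" by (simp add: card_Diff_singleton)
  also have "real (CARD('a) - 1) = real CARD('a) - 1"
    using finite_UNIV_card_ge_0[where ?'a='a] by (simp add: of_nat_diff Suc_leI)
  finally show ?thesis by simp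
qed

lemma wt_sum:
  "(\<Sum>y\<in>{y. set y \<subseteq> (UNIV :: 'a::finite set) \<and> length y = length x}. wt a b x y)
     = (b + (real CARD('a) - 1) * a) ^ length x"
proof (induction x)
  case Nil then show ?case by simp
next
  case (Cons c x)
  let ?L = "{y. set y \<subseteq> (UNIV :: 'a set) \<and> length y = length x}"
  have inj: "inj_on (\<lambda>(xs, n). n # xs) (?L \<times> UNIV)" by (auto simp: inj_on_def)
  have "(\<Sum>y\<in>{y. set y \<subseteq> (UNIV :: 'a set) \<and> length y = length (c # x)}. wt a b (c # x) y)
      = (\<Sum>y\<in>(\<lambda>(xs, n). n # xs) ` (?L \<times> UNIV). wt a b (c # x) y)"
    by (simp only: length_Cons lists_length_Suc_eq)
  also have "\<dots> = (\<Sum>p\<in>?L \<times> UNIV. wt a b (c # x) (snd p # fst p))"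
    by (subst sum.reindex[OF inj]) (simp add: case_prod_beta)
  also have "\<dots> = (\<Sum>(w,d)\<in>?L \<times> UNIV. (if c = d then b else a) * wt a b x w)"
    by (simp add: case_prod_beta)
  also have "\<dots> = (\<Sum>w\<in>?L. \<Sum>d\<in>UNIV. (if c = d then b else a) * wt a b x w)"
    by (rule sum.cartesian_product[symmetric])
  also have "\<dots> = (\<Sum>w\<in>?L. (b + (real CARD('a) - 1) * a) * wt a b x w)"
    by (simp add: sum_distrib_right[symmetric] sum_if_UNIV)
  also have "\<dots> = (b + (real CARD('a) - 1) * a) * (\<Sum>w\<in>?L. wt a b x w)"
    by (simp add: sum_distrib_left)
  also have "\<dots> = (b + (real CARD('a) - 1) * a) ^ length (c # x)"
    using Cons.IH by simp
  finally show ?case .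
qed

lemma pow_mono_aux:
  fixes a b :: real
  assumes "0 \<le> a" "a \<le> b" "d \<le> r" "r \<le> n"
  shows "a ^ r * b ^ (n - r) \<le> a ^ d * b ^ (n - d)"
proof -
  have "a ^ r = a ^ d * a ^ (r - d)" using assms by (simp add: power_add[symmetric])
  moreover have "b ^ (n - d) = b ^ (r - d) * b ^ (n - r)" using assms by (simp add: power_add[symmetric])
  moreover have "a ^ (r - d) \<le> b ^ (r - d)" using assms by (simp add: power_mono)
  ultimately show ?thesis using assms
    by (simp add: mult.assoc mult_left_mono mult_right_mono)
qed

lemma ball_bound:
  fixes x :: "'a::finite list"
  assumes "0 \<le> a" "a \<le> b" "b + (real CARD('a) - 1) * a = 1" "r \<le> length x"
  shows "real (card {y. length y = length x \<and> hamming x y \<le> r}) * (a ^ r * b ^ (length x - r)) \<le> 1"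
proof -
  let ?B = "{y. length y = length x \<and> hamming x y \<le> r}"
  let ?L = "{y. set y \<subseteq> (UNIV :: 'a set) \<and> length y = length x}"
  have fin: "finite ?L" by (rule finite_lists_length_eq) simp
  have sub: "?B \<subseteq> ?L" by auto
  have "real (card ?B) * (a ^ r * b ^ (length x - r)) = (\<Sum>y\<in>?B. a ^ r * b ^ (length x - r))" by simp
  also have "\<dots> \<le> (\<Sum>y\<in>?B. wt a b x y)"
  proof (rule sum_mono)
    fix y assume "y \<in> ?B"
    then show "a ^ r * b ^ (length x - r) \<le> wt a b x y"
      using wt_eq[of y x a b] pow_mono_aux[of a b "hamming x y" r "length x"] assms by auto
  qed
  also have "\<dots> \<le> (\<Sum>y\<in>?L. wt a b x y)"
    by (rule sum_mono2[OF fin sub]) (use wt_nonneg[of a b] assms in auto)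
  also have "\<dots> = 1" using wt_sum[of a b x] assms by simp
  finally show ?thesis .
qed


lemma capacity_props:
  fixes X :: "(int \<Rightarrow> 'a::finite) set"
  assumes "CARD('a) \<ge> 2" "X \<noteq> {}"
  shows "(\<lambda>n. log (real CARD('a)) (real (card (blocks n X))) / real n) \<longlonglongrightarrow> capacity X"
    and "0 \<le> capacity X" and "capacity X \<le> 1"
proof -
  let ?q = "real CARD('a)"
  define f where "f n = log ?q (real (card (blocks n X)))" for n
  have q1: "?q > 1" using assms by simp
  have pos: "real (card (blocks n X)) \<ge> 1" for n using card_blocks_pos[OF assms(2), of n] by simp
  have nn: "f n \<ge> 0" for n
  proof -
    have "log ?q 1 \<le> log ?q (real (card (blocks n X)))" by (rule log_mono) (use q1 pos[of n] in auto)
    then show ?thesis unfolding f_def by simp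
  qed
  have sub: "f (m + n) \<le> f m + f n" for m n
  proof -
    have "real (card (blocks (m + n) X)) \<le> real (card (blocks m X)) * real (card (blocks n X))"
      using card_blocks_sub[of m n X] by (simp flip: of_nat_mult)
    then have "f (m + n) \<le> log ?q (real (card (blocks m X)) * real (card (blocks n X)))"
      unfolding f_def using q1 pos[of "m+n"] by simp
    also have "\<dots> = f m + f n" unfolding f_def using q1 pos[of m] pos[of n] by (simp add: log_mult)
    finally show ?thesis .
  qed
  have le: "f n / real n \<le> 1" for n
  proof -
    have cq: "real (card (blocks n X)) \<le> ?q ^ n" using card_blocks_le[of n X] by (simp flip: of_nat_power)
    have "f n \<le> log ?q (?q ^ n)" unfolding f_def by (rule log_mono) (use q1 pos[of n] cq in auto)
    also have "\<dots> = real n" using q1 by (simp add: log_nat_power)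
    finally show ?thesis by (cases "n = 0") (auto simp: field_simps)
  qed
  have conv: "convergent (\<lambda>n. f n / real n)" by (rule fekete[OF sub nn])
  have lim: "(\<lambda>n. f n / real n) \<longlonglongrightarrow> capacity X"
    using conv unfolding capacity_def f_def[abs_def] by (simp add: convergent_LIMSEQ_iff)
  then show "(\<lambda>n. log (real CARD('a)) (real (card (blocks n X))) / real n) \<longlonglongrightarrow> capacity X"
    unfolding f_def .
  show "0 \<le> capacity X" by (rule LIMSEQ_le_const[OF lim]) (use nn in auto)
  show "capacity X \<le> 1" by (rule LIMSEQ_le_const2[OF lim]) (use le in auto)
qed

lemma key_ineq:
  fixes X Y :: "(int \<Rightarrow> 'a::finite) set"
  assumes q2: "CARD('a) \<ge> 2" and ne: "X \<noteq> {}" "Y \<noteq> {}" and n1: "n \<ge> 1"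
    and small: "real (cov_radius (blocks n X) (blocks n Y)) / real n \<le> 1 - 1 / real CARD('a)"
  shows "log (real CARD('a)) (real (card (blocks n Y))) / real n
     \<le> log (real CARD('a)) (real (card (blocks n X))) / real n
        + Hq (real CARD('a)) (real (cov_radius (blocks n X) (blocks n Y)) / real n)"
proof -
  let ?q = "real CARD('a)"
  define r where "r = cov_radius (blocks n X) (blocks n Y)"
  define p where "p = real r / real n"
  define a where "a = p / (?q - 1)"
  define b where "b = 1 - p"
  define K where "K = a ^ r * b ^ (n - r)"
  define BX where "BX = blocks n X"
  define BY where "BY = blocks n Y"
  have q1: "?q > 1" using q2 by simp
  have p0: "p \<ge> 0" unfolding p_def by simp
  have "1 / ?q > 0" using q1 by simp
  then have p1: "p < 1" using small unfolding p_def r_def by linarith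
  have rn: "r \<le> n" using p1 n1 unfolding p_def by (simp add: field_simps)
  have rp: "real r = real n * p" unfolding p_def using n1 by simp
  have a0: "a \<ge> 0" unfolding a_def using p0 q1 by simp
  have "p * ?q \<le> ?q - 1" using small q1 unfolding p_def r_def by (simp add: field_simps)
  then have ab: "a \<le> b" unfolding a_def b_def using q1 by (simp add: field_simps)
  have ab1: "b + (?q - 1) * a = 1" unfolding a_def b_def using q1 by simp
  have b0: "b > 0" unfolding b_def using p1 by simp
  have K0: "K > 0"
  proof (cases "r = 0")
    case True then show ?thesis unfolding K_def using b0 by simp
  next
    case False
    then have "p > 0" unfolding p_def using n1 by simp
    then have "a > 0" unfolding a_def using q1 by simp
    then show ?thesis unfolding K_def using b0 by simp
  qed
  have finX: "finite BX" "BX \<noteq> {}" unfolding BX_def by (simp_all add: blocks_finite blocks_nonempty ne)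
  have finY: "finite BY" "BY \<noteq> {}" unfolding BY_def by (simp_all add: blocks_finite blocks_nonempty ne)
  have lenX: "length x = n" if "x \<in> BX" for x using that unfolding BX_def blocks_def by auto
  define ball where "ball x = {y. length y = length x \<and> hamming x y \<le> r}" for x :: "'a list"
  have cover: "BY \<subseteq> (\<Union>x\<in>BX. ball x)"
  proof
    fix y assume y: "y \<in> BY"
    have "Min ((\<lambda>x. hamming x y) ` BX) \<in> (\<lambda>x. hamming x y) ` BX"
      using finX by (intro Min_in) auto
    then obtain x where x: "x \<in> BX" "hamming x y = Min ((\<lambda>x. hamming x y) ` BX)" by auto
    have "Min ((\<lambda>x. hamming x y) ` BX) \<le> r"
      unfolding r_def cov_radius_def BX_def[symmetric] BY_def[symmetric]
      using finY y by (intro Max_ge) auto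
    moreover have "length y = n" using y unfolding BY_def blocks_def by auto
    ultimately show "y \<in> (\<Union>x\<in>BX. ball x)"
      by (intro UN_I[OF x(1)]) (use x lenX in \<open>auto simp: ball_def\<close>)
  qed
  have ballb: "real (card (ball x)) \<le> 1 / K" if "x \<in> BX" for x
  proof -
    have "real (card (ball x)) * K \<le> 1"
      using ball_bound[OF a0 ab _, where x=x and r=r] ab1 rn lenX[OF that] unfolding ball_def K_def by simp
    then show ?thesis using K0 by (simp add: field_simps)
  qed
  have "real (card BY) \<le> real (card (\<Union>x\<in>BX. ball x))"
  proof -
    have finball: "finite (ball x)" for x
      by (rule finite_subset[OF _ finite_lists_length_eq[OF finite_class.finite_UNIV, of "length x"]])
        (auto simp: ball_def)
    have "card BY \<le> card (\<Union>x\<in>BX. ball x)"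
      by (rule card_mono[OF _ cover]) (use finX finball in auto)
    then show ?thesis by simp
  qed
  also have "\<dots> \<le> (\<Sum>x\<in>BX. real (card (ball x)))"
    using card_UN_le[OF finX(1), of ball] by (simp flip: of_nat_sum)
  also have "\<dots> \<le> (\<Sum>x\<in>BX. 1 / K)" by (rule sum_mono) (use ballb in auto)
  also have "\<dots> = real (card BX) / K" by simp
  finally have cardineq: "real (card BY) * K \<le> real (card BX)" using K0 by (simp add: field_simps)
  have cBY: "real (card BY) > 0" and cBX: "real (card BX) > 0" using finX finY by (auto simp: card_gt_0_iff)
  have "log ?q (real (card BY) * K) \<le> log ?q (real (card BX))"
    by (rule log_mono) (use cardineq q1 cBY K0 in auto)
  then have L1: "log ?q (real (card BY)) + log ?q K \<le> log ?q (real (card BX))"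
    using q1 cBY K0 by (simp add: log_mult)
  have LK: "log ?q K = - real n * Hq ?q p"
  proof (cases "r = 0")
    case True
    then have "p = 0" unfolding p_def by simp
    then show ?thesis unfolding K_def b_def using True by (simp add: Hq_def)
  next
    case False
    then have pp: "p > 0" unfolding p_def using n1 by simp
    then have ap: "a > 0" unfolding a_def using q1 by simp
    have "log ?q K = real r * log ?q a + real (n - r) * log ?q b"
      unfolding K_def using ap b0 q1 by (simp add: log_mult log_nat_power)
    also have "log ?q a = log ?q p - log ?q (?q - 1)" unfolding a_def using pp q1 by (simp add: log_divide)
    also have "real (n - r) = real n * (1 - p)" using rn rp by (simp add: of_nat_diff algebra_simps)
    finally show ?thesis unfolding Hq_alt rp b_def by (simp add: algebra_simps)
  qed
  have "log ?q (real (card BY)) \<le> log ?q (real (card BX)) + real n * Hq ?q p" using L1 LK by simp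
  then have "log ?q (real (card BY)) / real n \<le> (log ?q (real (card BX)) + real n * Hq ?q p) / real n"
    using n1 by (simp add: divide_right_mono)
  also have "\<dots> = log ?q (real (card BX)) / real n + Hq ?q p" using n1 by (simp add: field_simps)
  finally show ?thesis unfolding BX_def BY_def p_def r_def .
qed

theorem proposition10:
  fixes X Y :: "(int \<Rightarrow> 'a::finite) set"
  assumes "CARD('a) \<ge> 2"
    and "constrained_system X" and "constrained_system Y"
    and "X \<noteq> {}" and "Y \<noteq> {}"
    and "capacity X \<le> capacity Y"
  shows "ereal (Hq_inv (real CARD('a)) (capacity Y - capacity X)) \<le> system_cov_radius X Y"
proof -
  let ?q = "real CARD('a)"
  define t where "t = Hq_inv ?q (capacity Y - capacity X)"
  define R where "R n = real (cov_radius (blocks n X) (blocks n Y)) / real n" for n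
  define fX where "fX n = log ?q (real (card (blocks n X))) / real n" for n
  define fY where "fY n = log ?q (real (card (blocks n Y))) / real n" for n
  have q1: "?q > 1" using assms(1) by simp
  note cX = capacity_props[OF assms(1) assms(4)]
  note cY = capacity_props[OF assms(1) assms(5)]
  have t: "0 \<le> t" "t \<le> 1 - 1 / ?q" "Hq ?q t = capacity Y - capacity X"
    using Hq_inv_prop[OF q1, of "capacity Y - capacity X"] cX cY assms(6) unfolding t_def by auto
  have "ereal t \<le> liminf (\<lambda>n. ereal (R n))"
  proof (subst le_Liminf_iff, intro allI impI)
    fix y assume yt: "y < ereal t"
    show "\<forall>\<^sub>F n in sequentially. y < ereal (R n)"
    proof (rule ccontr)
      assume "\<not> (\<forall>\<^sub>F n in sequentially. y < ereal (R n))"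
      then have fr: "\<exists>\<^sub>F n in sequentially. ereal (R n) \<le> y"
        by (simp add: not_eventually not_less)
      then obtain n0 where "ereal (R n0) \<le> y" using frequently_ex by blast
      moreover have "R n0 \<ge> 0" unfolding R_def by simp
      ultimately have y0: "0 \<le> y" by (metis ereal_less_eq(5) order_trans)
      then obtain c where c: "y = ereal c" using yt by (cases y) auto
      have c0: "0 \<le> c" "c < t" using y0 yt c by auto
      have fr2: "\<exists>\<^sub>F n in sequentially. fY n - fX n - Hq ?q c \<le> 0"
      proof -
        have "\<exists>\<^sub>F n in sequentially. n \<ge> 1 \<and> ereal (R n) \<le> y"
          using frequently_eventually_conj[OF fr eventually_ge_at_top[of 1]] .
        then show ?thesis
        proof (rule frequently_elim1)
          fix n assume n: "n \<ge> 1 \<and> ereal (R n) \<le> y"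
          then have Rc: "R n \<le> c" using c by simp
          have R0: "0 \<le> R n" unfolding R_def by simp
          have small: "R n \<le> 1 - 1 / ?q" using Rc c0 t by simp
          have "fY n \<le> fX n + Hq ?q (R n)"
            using key_ineq[OF assms(1) assms(4) assms(5), of n] n small
            unfolding fX_def fY_def R_def by simp
          moreover have "Hq ?q (R n) \<le> Hq ?q c"
            using Hq_strict_mono[OF q1 R0, of c] Rc c0 t by (cases "R n = c") auto
          ultimately show "fY n - fX n - Hq ?q c \<le> 0" by simp
        qed
      qed
      have "(\<lambda>n. fY n - fX n - Hq ?q c) \<longlonglongrightarrow> capacity Y - capacity X - Hq ?q c"
        unfolding fX_def fY_def by (intro tendsto_intros cX(1) cY(1))
      moreover have "Hq ?q c < Hq ?q t" using Hq_strict_mono[OF q1 c0(1) c0(2) t(2)] .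
      ultimately have "\<forall>\<^sub>F n in sequentially. fY n - fX n - Hq ?q c > 0"
        using t(3) by (intro order_tendstoD(1)) auto
      from frequently_eventually_conj[OF fr2 this] have "\<exists>\<^sub>F n in sequentially. False"
        by (rule frequently_elim1) auto
      then show False by simp
    qed
  qed
  then show ?thesis unfolding system_cov_radius_def t_def R_def .
qed

end
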